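(* For every natural number $n\geq 2$: (i) $\chi_d^t(F_n\star K_n)=n+3$; (ii) $\chi_d^t(F_n\star C_{2n})=5$.
   Context: All graphs are simple and finite. A total dominator coloring (TD-coloring) of a graph $G$ with no isolated vertex is a proper vertex coloring of $G$ in which every vertex of $G$ is adjacent to every vertex of some color class. The total dominator chromatic number $\chi_d^t(G)$ is the minimum number of colors in a TD-coloring of $G$. The neighbourhood corona $G_1\star G_2$ is the graph obtained by taking one copy of $G_1$ and $|V(G_1)|$ copies of $G_2$, and, for each $i$, joining every neighbour (in $G_1$) of the $i$-th vertex of $G_1$ to every vertex of the $i$-th copy of $G_2$. The friendship graph $F_n$ ($n\ge 2$) is obtained by joining $n$ copies of the cycle $C_3$ at a common vertex. $K_n$ is the complete graph and $C_{2n}$ the cycle on $2n$ vertices. *)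

theory Defs
  imports Main
begin

text \<open>A simple graph: a finite vertex set together with an adjacency relation
  (only its restriction to the vertex set matters; it is symmetric and irreflexive
  for all graphs constructed below).\<close>
type_synonym 'a graph = "'a set \<times> ('a \<Rightarrow> 'a \<Rightarrow> bool)"

definition verts :: "'a graph \<Rightarrow> 'a set" where "verts G = fst G"
definition adj :: "'a graph \<Rightarrow> 'a \<Rightarrow> 'a \<Rightarrow> bool" where "adj G = snd G"

definition proper_coloring :: "'a graph \<Rightarrow> ('a \<Rightarrow> nat) \<Rightarrow> bool" where
  "proper_coloring G c \<longleftrightarrow>
     (\<forall>u\<in>verts G. \<forall>v\<in>verts G. adj G u v \<longrightarrow> c u \<noteq> c v)"

definition td_coloring :: "'a graph \<Rightarrow> ('a \<Rightarrow> nat) \<Rightarrow> bool" where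
  "td_coloring G c \<longleftrightarrow> proper_coloring G c \<and>
     (\<forall>v\<in>verts G. \<exists>u\<in>verts G. \<forall>w\<in>verts G. c w = c u \<longrightarrow> adj G v w)"

definition td_chrom :: "'a graph \<Rightarrow> nat" where
  "td_chrom G = (LEAST k. \<exists>c. td_coloring G c \<and> card (c ` verts G) = k)"

definition complete_graph :: "nat \<Rightarrow> nat graph" where
  "complete_graph n = ({0..<n}, \<lambda>i j. i \<noteq> j)"

definition cycle_graph :: "nat \<Rightarrow> nat graph" where
  "cycle_graph m = ({0..<m}, \<lambda>i j. i \<noteq> j \<and> (j = (i + 1) mod m \<or> i = (j + 1) mod m))"

text \<open>Friendship graph F_n: center 0, triangles {0, 2i-1, 2i} for i = 1..n.\<close>
definition friendship_graph :: "nat \<Rightarrow> nat graph" where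
  "friendship_graph n = ({0..2*n},
     \<lambda>i j. i \<noteq> j \<and> (i = 0 \<or> j = 0 \<or> (odd (min i j) \<and> max i j = min i j + 1)))"

text \<open>Neighbourhood corona G1 * G2: vertices Inl v (copy of G1) and Inr (v, x)
  (vertex x of the copy of G2 attached to v).\<close>
definition ncorona :: "'a graph \<Rightarrow> 'b graph \<Rightarrow> ('a + ('a \<times> 'b)) graph" where
  "ncorona G H = (Inl ` verts G \<union> Inr ` (verts G \<times> verts H),
     \<lambda>p q. case (p, q) of
        (Inl u, Inl v) \<Rightarrow> adj G u v
      | (Inr (i, x), Inr (j, y)) \<Rightarrow> i = j \<and> adj H x y
      | (Inl u, Inr (i, x)) \<Rightarrow> adj G u i
      | (Inr (i, x), Inl u) \<Rightarrow> adj G i u)"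

end

theory Submission
  imports Defs
begin

lemma verts_nc: "verts (ncorona G H) = Inl ` verts G \<union> Inr ` (verts G \<times> verts H)"
  by (simp add: ncorona_def verts_def)

lemma adj_nc[simp]:
  "adj (ncorona G H) (Inl u) (Inl v) = adj G u v"
  "adj (ncorona G H) (Inr (i,x)) (Inr (j,y)) = (i = j \<and> adj H x y)"
  "adj (ncorona G H) (Inl u) (Inr (i,x)) = adj G u i"
  "adj (ncorona G H) (Inr (i,x)) (Inl u) = adj G i u"
  by (simp_all add: ncorona_def adj_def)

lemma verts_F: "verts (friendship_graph n) = {0..2*n}"
  by (simp add: friendship_graph_def verts_def)

lemma adj_F: "adj (friendship_graph n) i j =
   (i \<noteq> j \<and> (i = 0 \<or> j = 0 \<or> (odd (min i j) \<and> max i j = min i j + 1)))"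
  by (simp add: friendship_graph_def adj_def)

lemma lower:
  fixes c :: "nat + (nat \<times> 'b) \<Rightarrow> nat"
  assumes n: "n \<ge> 2" and td: "td_coloring (ncorona (friendship_graph n) H) c"
    and B: "B \<subseteq> verts H" "finite B" and inj: "inj_on (\<lambda>x. c (Inr (0,x))) B"
    and x0: "x0 \<in> verts H" and fin: "finite (verts H)"
  shows "card (c ` verts (ncorona (friendship_graph n) H)) \<ge> card B + 3"
proof -
  let ?G = "ncorona (friendship_graph n) H"
  let ?V = "verts ?G"
  have pr: "\<And>u v. u \<in> ?V \<Longrightarrow> v \<in> ?V \<Longrightarrow> adj ?G u v \<Longrightarrow> c u \<noteq> c v"
    using td unfolding td_coloring_def proper_coloring_def by blast
  have inV: "Inl a \<in> ?V" if "a \<le> 4" for a using that n by (simp add: verts_nc verts_F)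
  have inV0: "Inr (a,y) \<in> ?V" if "a \<le> 4" "y \<in> verts H" for a y
    using that n by (auto simp add: verts_nc verts_F)
  define A where "A = (\<lambda>x. c (Inr (0,x))) ` B"
  have cA: "card A = card B" using inj by (simp add: A_def card_image)
  have notA: "c (Inl a) \<notin> A" if "1 \<le> a" "a \<le> 4" for a
  proof
    assume "c (Inl a) \<in> A"
    then obtain y where y: "y \<in> B" "c (Inl a) = c (Inr (0,y))" by (auto simp: A_def)
    have "c (Inl a) \<noteq> c (Inr (0,y))"
      using that y B by (intro pr inV inV0) (auto simp: adj_F)
    with y show False by simp
  qed
  define p where "p = c (Inl 1)"
  define q where "q = c (Inl 2)"
  have pq: "p \<noteq> q" unfolding p_def q_def by (intro pr inV) (auto simp: adj_F)
  have 34: "c (Inl 3) \<noteq> c (Inl 4)" by (intro pr inV) (auto simp: adj_F)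
  have "\<exists>r \<in> c ` ?V. r \<notin> A \<union> {p,q}"
  proof (rule ccontr)
    assume "\<not> ?thesis"
    hence sub: "c ` ?V \<subseteq> A \<union> {p,q}" by blast
    have c3: "c (Inl 3) \<in> {p,q}" using sub inV[of 3] notA[of 3] by auto
    have c4: "c (Inl 4) \<in> {p,q}" using sub inV[of 4] notA[of 4] by auto
    have tdd: "\<forall>v\<in>?V. \<exists>u\<in>?V. \<forall>w\<in>?V. c w = c u \<longrightarrow> adj ?G v w"
      using td unfolding td_coloring_def by (rule conjunct2)
    obtain u where u: "u \<in> ?V" and uu: "\<forall>w\<in>?V. c w = c u \<longrightarrow> adj ?G (Inr (1,x0)) w"
      using bspec[OF tdd inV0[of 1 x0]] x0 by auto
    have "c u \<in> A \<union> {p,q}" using sub u by blast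
    then show False
    proof
      assume "c u \<in> A"
      then obtain y where y: "y \<in> B" "c u = c (Inr (0,y))" by (auto simp: A_def)
      have yV: "Inr (0,y) \<in> ?V" using inV0[of 0 y] B y by auto
      have "adj ?G (Inr (1,x0)) (Inr (0,y))" using bspec[OF uu yV] y(2) by simp
      then show False by simp
    next
      assume "c u \<in> {p,q}"
      then have "c u = c (Inl 3) \<or> c u = c (Inl 4)" using c3 c4 34 pq by auto
      then have "adj ?G (Inr (1,x0)) (Inl 3) \<or> adj ?G (Inr (1,x0)) (Inl 4)"
        using uu inV[of 3] inV[of 4] by auto
      then show False by (auto simp: adj_F)
    qed
  qed
  then obtain r where r: "r \<in> c ` ?V" "r \<notin> A \<union> {p,q}" by blast
  have pV: "p \<in> c ` ?V" "q \<in> c ` ?V" using inV[of 1] inV[of 2] by (auto simp: p_def q_def)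
  have AV: "A \<subseteq> c ` ?V" using inV0[of 0] B by (auto simp: A_def)
  have finV: "finite ?V" using fin by (simp add: verts_nc verts_F)
  have "insert r (insert p (insert q A)) \<subseteq> c ` ?V" using r pV AV by blast
  then have "card (insert r (insert p (insert q A))) \<le> card (c ` ?V)"
    using finV by (intro card_mono) auto
  moreover have "card (insert r (insert p (insert q A))) = card A + 3"
    using r pq notA[of 1] notA[of 2] B by (simp add: A_def p_def q_def)
  ultimately show ?thesis using cA by simp
qed


definition col :: "nat \<Rightarrow> ('b \<Rightarrow> nat) \<Rightarrow> nat + (nat \<times> 'b) \<Rightarrow> nat" where
  "col k g = (\<lambda>p. case p of Inl v \<Rightarrow> (if v = 0 then k+2 else if odd v then k else k+1)
                       | Inr (v,x) \<Rightarrow> g x)"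

lemma col_simps[simp]:
  "col k g (Inl v) = (if v = 0 then k+2 else if odd v then k else k+1)"
  "col k g (Inr (v,x)) = g x"
  by (simp_all add: col_def)

lemma upper:
  fixes H :: "'b graph" and g :: "'b \<Rightarrow> nat"
  assumes n: "n \<ge> 1" and gp: "\<And>x y. x \<in> verts H \<Longrightarrow> y \<in> verts H \<Longrightarrow> adj H x y \<Longrightarrow> g x \<noteq> g y"
    and gi: "g ` verts H = {0..<k}" and fin: "finite (verts H)"
  shows "td_coloring (ncorona (friendship_graph n) H) (col k g)
       \<and> card (col k g ` verts (ncorona (friendship_graph n) H)) = k + 3"
proof
  let ?G = "ncorona (friendship_graph n) H"
  let ?V = "verts ?G"
  let ?c = "col k g :: nat + (nat \<times> 'b) \<Rightarrow> nat"
  have glt: "g x < k" if "x \<in> verts H" for x using gi that by auto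
  have pr: "proper_coloring ?G ?c"
    unfolding proper_coloring_def
  proof (intro ballI impI)
    fix u v assume u: "u \<in> ?V" and v: "v \<in> ?V" and a: "adj ?G u v"
    show "?c u \<noteq> ?c v"
    proof (cases u)
      case (Inl a1)
      then show ?thesis
      proof (cases v)
        case (Inl b1)
        with \<open>u = Inl a1\<close> a show ?thesis by (auto simp: adj_F min_def max_def split: if_splits)
      next
        case (Inr bb)
        then obtain i y where vy: "v = Inr (i,y)" by (cases bb) auto
        with v have "y \<in> verts H" by (auto simp: verts_nc)
        then have "g y < k" by (rule glt)
        with vy \<open>u = Inl a1\<close> show ?thesis by auto
      qed
    next
      case (Inr aa)
      then obtain i x where ux: "u = Inr (i,x)" by (cases aa) auto
      then show ?thesis
      proof (cases v)
        case (Inl b1)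
        from u ux have "x \<in> verts H" by (auto simp: verts_nc)
        then have "g x < k" by (rule glt)
        with Inl ux show ?thesis by auto
      next
        case (Inr bb)
        then obtain j y where "v = Inr (j,y)" by (cases bb) auto
        with u v a gp ux show ?thesis by (auto simp: verts_nc)
      qed
    qed
  qed
  have in1: "Inl 1 \<in> ?V" "Inl 0 \<in> ?V" using n by (auto simp: verts_nc verts_F)
  have cls1: "w \<in> ?V \<Longrightarrow> ?c w = k \<Longrightarrow> \<exists>v. w = Inl v \<and> odd v" for w
    by (auto simp: verts_nc split: if_splits dest: glt)
  have cls0: "w \<in> ?V \<Longrightarrow> ?c w = k+2 \<Longrightarrow> w = Inl 0" for w
    by (auto simp: verts_nc split: if_splits dest: glt)
  have dom: "\<exists>u\<in>?V. \<forall>w\<in>?V. ?c w = ?c u \<longrightarrow> adj ?G v w" if v: "v \<in> ?V" for v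
  proof (cases "v = Inl 0 \<or> (\<exists>x. v = Inr (0,x))")
    case True
    show ?thesis
    proof (rule bexI[OF _ in1(1)], intro ballI impI)
      fix w assume "w \<in> ?V" "?c w = ?c (Inl 1)"
      then obtain b where "w = Inl b" "odd b" using cls1 by auto
      moreover have "b \<noteq> 0" using \<open>odd b\<close> by presburger
      ultimately show "adj ?G v w" using True by (auto simp: adj_F)
    qed
  next
    case False
    show ?thesis
    proof (rule bexI[OF _ in1(2)], intro ballI impI)
      fix w assume "w \<in> ?V" "?c w = ?c (Inl 0)"
      then have "w = Inl 0" using cls0 by auto
      moreover have "(\<exists>a. v = Inl a \<and> a \<noteq> 0) \<or> (\<exists>a x. v = Inr (a,x) \<and> a \<noteq> 0)"
        using False by (cases v) auto
      ultimately show "adj ?G v w" by (auto simp: adj_F)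
    qed
  qed
  show "td_coloring ?G ?c" unfolding td_coloring_def using pr dom by blast
  have "?c ` ?V = {0..<k} \<union> {k, k+1, k+2}"
  proof
    show "?c ` ?V \<subseteq> {0..<k} \<union> {k, k+1, k+2}" by (auto simp: verts_nc split: if_splits dest: glt)
    have a: "{0..<k} \<subseteq> ?c ` ?V"
    proof
      fix z assume "z \<in> {0..<k}"
      then obtain x where "x \<in> verts H" "z = g x" using gi by force
      moreover have "(0::nat) \<in> verts (friendship_graph n)" by (simp add: verts_F)
      ultimately have "Inr (0,x) \<in> ?V" "z = ?c (Inr (0,x))" by (auto simp: verts_nc)
      then show "z \<in> ?c ` ?V" by (rule rev_image_eqI)
    qed
    have "Inl 2 \<in> ?V" using n by (auto simp: verts_nc verts_F)
    then have "?c (Inl 0) \<in> ?c ` ?V" "?c (Inl 1) \<in> ?c ` ?V" "?c (Inl 2) \<in> ?c ` ?V"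
      using in1 by blast+
    then show "{0..<k} \<union> {k, k+1, k+2} \<subseteq> ?c ` ?V" using a by simp
  qed
  moreover have "{0..<k} \<union> {k, k+1, k+2} = {0..<k+3}" by auto
  ultimately show "card (?c ` ?V) = k + 3" by simp
qed

lemma td_chrom_eq:
  assumes "td_coloring G c0" "card (c0 ` verts G) = m"
    and "\<And>c. td_coloring G c \<Longrightarrow> card (c ` verts G) \<ge> m"
  shows "td_chrom G = m"
  unfolding td_chrom_def
proof (rule Least_equality)
  show "\<exists>c. td_coloring G c \<and> card (c ` verts G) = m" using assms(1,2) by blast
next
  fix y assume "\<exists>c. td_coloring G c \<and> card (c ` verts G) = y"
  then obtain c where "td_coloring G c" "card (c ` verts G) = y" by blast
  then show "m \<le> y" using assms(3) by metis
qed

theorem mainTheorem5: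
  fixes n :: nat
  assumes "n \<ge> 2"
  shows "td_chrom (ncorona (friendship_graph n) (complete_graph n)) = n + 3
       \<and> td_chrom (ncorona (friendship_graph n) (cycle_graph (2 * n))) = 5"
proof
  have n1: "n \<ge> 1" using assms by simp
  have vK: "verts (complete_graph n) = {0..<n}" by (simp add: complete_graph_def verts_def)
  have aK: "adj (complete_graph n) x y = (x \<noteq> y)" for x y by (simp add: complete_graph_def adj_def)
  have vC: "verts (cycle_graph (2*n)) = {0..<2*n}" by (simp add: cycle_graph_def verts_def)
  have aC: "adj (cycle_graph (2*n)) x y = (x \<noteq> y \<and> (y = (x + 1) mod (2*n) \<or> x = (y + 1) mod (2*n)))" for x y
    by (simp add: cycle_graph_def adj_def)
  show "td_chrom (ncorona (friendship_graph n) (complete_graph n)) = n + 3"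
  proof (rule td_chrom_eq)
    have "td_coloring (ncorona (friendship_graph n) (complete_graph n)) (col n (\<lambda>x. x))
       \<and> card (col n (\<lambda>x. x) ` verts (ncorona (friendship_graph n) (complete_graph n))) = n + 3"
      by (rule upper[OF n1]) (auto simp: vK aK)
    then show "td_coloring (ncorona (friendship_graph n) (complete_graph n)) (col n (\<lambda>x. x))"
      "card (col n (\<lambda>x. x) ` verts (ncorona (friendship_graph n) (complete_graph n))) = n + 3"
      by auto
  next
    fix c :: "nat + nat \<times> nat \<Rightarrow> nat"
    assume td: "td_coloring (ncorona (friendship_graph n) (complete_graph n)) c"
    have inj: "inj_on (\<lambda>x. c (Inr (0,x))) {0..<n}"
    proof (rule inj_onI, rule ccontr)
      fix x y assume "x \<in> {0..<n}" "y \<in> {0..<n}" "c (Inr (0, x)) = c (Inr (0, y))" "x \<noteq> y"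
      moreover have "Inr (0,x) \<in> verts (ncorona (friendship_graph n) (complete_graph n))"
        "Inr (0,y) \<in> verts (ncorona (friendship_graph n) (complete_graph n))"
        using calculation by (auto simp: verts_nc verts_F vK)
      moreover have "adj (ncorona (friendship_graph n) (complete_graph n)) (Inr (0,x)) (Inr (0,y))"
        using \<open>x \<noteq> y\<close> by (simp add: aK)
      moreover have "proper_coloring (ncorona (friendship_graph n) (complete_graph n)) c"
        using td unfolding td_coloring_def by (rule conjunct1)
      ultimately show False unfolding proper_coloring_def by blast
    qed
    have "card {0..<n} + 3 \<le> card (c ` verts (ncorona (friendship_graph n) (complete_graph n)))"
      by (rule lower[OF assms td _ _ inj, of 0]) (use n1 in \<open>auto simp: vK\<close>)
    then show "n + 3 \<le> card (c ` verts (ncorona (friendship_graph n) (complete_graph n)))" by simp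
  qed
  show "td_chrom (ncorona (friendship_graph n) (cycle_graph (2*n))) = 5"
  proof (rule td_chrom_eq)
    have step: "(a + 1) mod (2*n) mod 2 \<noteq> a mod 2" if "a < 2*n" for a
    proof (cases "a + 1 < 2*n")
      case True
      then have "(a + 1) mod (2*n) = a + 1" by simp
      moreover have "(a + 1) mod 2 \<noteq> a mod 2" by presburger
      ultimately show ?thesis by simp
    next
      case False
      then have e: "a + 1 = 2*n" using that by simp
      then have "(a + 1) mod (2*n) = 0" by simp
      moreover have "a mod 2 = 1" using e by presburger
      ultimately show ?thesis by simp
    qed
    have gp: "x mod 2 \<noteq> y mod 2" if "x \<in> {0..<2*n}" "y \<in> {0..<2*n}" "adj (cycle_graph (2*n)) x y" for x y
    proof -
      have "y = (x + 1) mod (2*n) \<or> x = (y + 1) mod (2*n)" using that(3) by (simp add: aC)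
      then show ?thesis
      proof
        assume "y = (x + 1) mod (2*n)"
        with step[of x] that(1) show ?thesis by simp
      next
        assume "x = (y + 1) mod (2*n)"
        with step[of y] that(2) show ?thesis by simp
      qed
    qed
    have gi: "(\<lambda>x. x mod 2) ` {0..<2*n} = {0..<2}"
    proof
      show "(\<lambda>x. x mod 2) ` {0..<2*n} \<subseteq> {0..<2}" by auto
      have a0: "(0::nat) \<in> {0..<2*n}" and a1: "(1::nat) \<in> {0..<2*n}" using n1 by auto
      have "0 mod 2 \<in> (\<lambda>x. x mod 2) ` {0..<2*n}" using a0 by (rule imageI)
      moreover have "1 mod 2 \<in> (\<lambda>x. x mod 2) ` {0..<2*n}" using a1 by (rule imageI)
      ultimately
      have "0 \<in> (\<lambda>x. x mod 2) ` {0..<2*n}" "1 \<in> (\<lambda>x. x mod 2) ` {0..<2*n}" by simp_all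
      moreover have "{0..<2::nat} = {0,1}" by auto
      ultimately show "{0..<2} \<subseteq> (\<lambda>x. x mod 2) ` {0..<2*n}" by simp
    qed
    have "td_coloring (ncorona (friendship_graph n) (cycle_graph (2*n))) (col 2 (\<lambda>x. x mod 2))
       \<and> card (col 2 (\<lambda>x. x mod 2) ` verts (ncorona (friendship_graph n) (cycle_graph (2*n)))) = 2 + 3"
      by (rule upper[OF n1]) (use gp gi in \<open>auto simp: vC\<close>)
    then show "td_coloring (ncorona (friendship_graph n) (cycle_graph (2*n))) (col 2 (\<lambda>x. x mod 2))"
      "card (col 2 (\<lambda>x. x mod 2) ` verts (ncorona (friendship_graph n) (cycle_graph (2*n)))) = 5"
      by auto
  next
    fix c :: "nat + nat \<times> nat \<Rightarrow> nat"
    assume td: "td_coloring (ncorona (friendship_graph n) (cycle_graph (2*n))) c"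
    have "c (Inr (0,0)) \<noteq> c (Inr (0,1))"
    proof -
      have "Inr (0,0) \<in> verts (ncorona (friendship_graph n) (cycle_graph (2*n)))"
        "Inr (0,1) \<in> verts (ncorona (friendship_graph n) (cycle_graph (2*n)))"
        using assms by (auto simp: verts_nc verts_F vC)
      moreover have "adj (ncorona (friendship_graph n) (cycle_graph (2*n))) (Inr (0,0)) (Inr (0,1))"
        using assms by (simp add: aC)
      moreover have "proper_coloring (ncorona (friendship_graph n) (cycle_graph (2*n))) c"
        using td unfolding td_coloring_def by (rule conjunct1)
      ultimately show ?thesis unfolding proper_coloring_def by blast
    qed
    then have inj: "inj_on (\<lambda>x. c (Inr (0,x))) {0,1::nat}" by (auto simp: inj_on_def)
    have "card {0,1::nat} + 3 \<le> card (c ` verts (ncorona (friendship_graph n) (cycle_graph (2*n))))"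
      by (rule lower[OF assms td _ _ inj, of 0]) (use assms in \<open>auto simp: vC\<close>)
    then show "5 \<le> card (c ` verts (ncorona (friendship_graph n) (cycle_graph (2*n))))" by simp
  qed
qed

end
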